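(* Let $R$ be an integral domain with field of fractions $K$, and let $n$ be a nonnegative integer. If $D\colon R\to R$ belongs to the closure of $\mathcal{O}^n_0(R)$ in $R^R$, then $D/j$ (i.e. $x\mapsto D(x)/x$), as a map from the semigroup $R^*$ to $K$, is a generalized polynomial of degree at most $n$.
   Context: Rings are commutative with unit. A derivation on $R$ is a map $d\colon R\to R$ with $d(x+y)=d(x)+d(y)$ and $d(xy)=d(x)y+d(y)x$. A differential operator of degree at most $n$ on $R$ is an $R$-linear combination of finitely many maps $d_1\circ\cdots\circ d_k$, $d_i$ derivations, $k\le n$ (for $k=0$ the identity map $j$). $\mathcal{O}^n_0(R)$ is the set of such operators $D$ with $D(1)=0$. $R^R$ carries the product topology with $R$ discrete. $R^*$ is the semigroup $R\setminus\{0\}$ under multiplication. For $f$ on an abelian semigroup $G$, $\Delta_g f(x)=f(x\cdot g)-f(x)$; $f$ is a generalized polynomial of degree at most $n$ if $\Delta_{g_1}\cdots\Delta_{g_{n+1}}f=0$ for all $g_1,\dots,g_{n+1}\in G$. *)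

theory Defs
  imports "HOL-Analysis.Analysis" "HOL-Computational_Algebra.Fraction_Field"
begin

definition derivation :: "('a::comm_ring_1 \<Rightarrow> 'a) \<Rightarrow> bool" where
  "derivation d \<longleftrightarrow>
     (\<forall>x y. d (x + y) = d x + d y) \<and> (\<forall>x y. d (x * y) = d x * y + d y * x)"

definition diff_ops :: "nat \<Rightarrow> ('a::comm_ring_1 \<Rightarrow> 'a) set" where
  "diff_ops n = {D. \<exists>(m::nat) (c::nat \<Rightarrow> 'a) (ds::nat \<Rightarrow> ('a \<Rightarrow> 'a) list).
      (\<forall>i<m. length (ds i) \<le> n \<and> (\<forall>d\<in>set (ds i). derivation d)) \<and>
      D = (\<lambda>x. \<Sum>i<m. c i * foldr (\<circ>) (ds i) id x)}"

definition O0 :: "nat \<Rightarrow> ('a::comm_ring_1 \<Rightarrow> 'a) set" where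
  "O0 n = {D \<in> diff_ops n. D 1 = 0}"

definition RR_top :: "('a \<Rightarrow> 'a) topology" where
  "RR_top = product_topology (\<lambda>_. discrete_topology UNIV) UNIV"

definition mdelta :: "'a::times \<Rightarrow> ('a \<Rightarrow> 'b::minus) \<Rightarrow> 'a \<Rightarrow> 'b" where
  "mdelta g f = (\<lambda>x. f (x * g) - f x)"

definition gen_poly_on :: "'a::times set \<Rightarrow> nat \<Rightarrow> ('a \<Rightarrow> 'b::{minus,zero}) \<Rightarrow> bool" where
  "gen_poly_on G n f \<longleftrightarrow>
     (\<forall>gs. length gs = Suc n \<and> set gs \<subseteq> G \<longrightarrow> (\<forall>x\<in>G. foldr mdelta gs f x = 0))"

end

theory Submission
  imports Defs
begin

definition comm :: "'a::comm_ring_1 \<Rightarrow> ('a \<Rightarrow> 'a) \<Rightarrow> 'a \<Rightarrow> 'a" where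
  "comm g E = (\<lambda>x. E (x * g) - g * E x)"

fun ordp :: "nat \<Rightarrow> ('a::comm_ring_1 \<Rightarrow> 'a) \<Rightarrow> bool" where
  "ordp 0 E = (\<forall>g x. comm g E x = 0)"
| "ordp (Suc k) E = (\<forall>g. ordp k (comm g E))"

lemma ordp_zero: "ordp k (\<lambda>x. 0::'a::comm_ring_1)"
  by (induction k) (auto simp: comm_def)

lemma ordp_add: "ordp k E \<Longrightarrow> ordp k F \<Longrightarrow> ordp k (\<lambda>x. E x + F x)"
proof (induction k arbitrary: E F)
  case 0 then show ?case by (simp add: comm_def algebra_simps)
next
  case (Suc k)
  have "comm g (\<lambda>x. E x + F x) = (\<lambda>x. comm g E x + comm g F x)" for g
    by (auto simp: comm_def algebra_simps)
  then show ?case using Suc by auto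
qed

lemma ordp_smult: "ordp k E \<Longrightarrow> ordp k (\<lambda>x. c * E x)"
proof (induction k arbitrary: E)
  case 0
  have "c * E (x * g) - g * (c * E x) = c * (E (x * g) - g * E x)" for g x
    by (simp add: algebra_simps)
  then show ?case using 0 by (simp add: comm_def)
next
  case (Suc k)
  have "comm g (\<lambda>x. c * E x) = (\<lambda>x. c * comm g E x)" for g
    by (auto simp: comm_def algebra_simps)
  then show ?case using Suc by auto
qed

lemma ordp_mono: "ordp k E \<Longrightarrow> ordp (Suc k) E"
proof (induction k arbitrary: E)
  case 0
  then have "comm g E = (\<lambda>x. 0)" for g by auto
  then show ?case using ordp_zero[of 0] by simp
next
  case (Suc k) then show ?case by simp
qed

lemma ordp_mono_le: "ordp k E \<Longrightarrow> k \<le> n \<Longrightarrow> ordp n E"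
proof (induction n)
  case 0 then show ?case by simp
next
  case (Suc n)
  then show ?case by (metis le_Suc_eq ordp_mono)
qed

lemma deriv_zero: "derivation d \<Longrightarrow> d 0 = 0"
  unfolding derivation_def by (metis add_0 add_left_imp_eq add.right_neutral)

lemma deriv_diff: "derivation d \<Longrightarrow> d (a - b) = d a - d b"
  unfolding derivation_def by (metis add_diff_cancel diff_add_cancel eq_diff_eq)

lemma ordp_deriv: "derivation d \<Longrightarrow> ordp k E \<Longrightarrow> ordp (Suc k) (d \<circ> E)"
proof (induction k arbitrary: E)
  case 0
  have key: "comm g (d \<circ> E) = (\<lambda>x. d (comm g E x) + d g * E x)" for g
  proof
    fix x
    have "d (g * E x) = d g * E x + d (E x) * g"
      using 0(1) unfolding derivation_def by blast
    then have e: "d (comm g E x) = d (E (x * g)) - (d g * E x + d (E x) * g)"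
      using deriv_diff[OF 0(1)] by (simp add: comm_def)
    have "comm g (d \<circ> E) x = d (E (x * g)) - g * d (E x)" by (simp add: comm_def)
    also have "\<dots> = d (comm g E x) + d g * E x" using e by (simp add: algebra_simps)
    finally show "comm g (d \<circ> E) x = d (comm g E x) + d g * E x" .
  qed
  have "comm g (d \<circ> E) = (\<lambda>x. d g * E x)" for g
    using key[of g] 0(2) deriv_zero[OF 0(1)] by simp
  then have "ordp 0 (comm g (d \<circ> E))" for g
    by (simp only:) (rule ordp_smult[OF 0(2)])
  then show ?case by (simp only: ordp.simps) simp
next
  case (Suc k)
  have key: "comm g (d \<circ> E) = (\<lambda>x. (d \<circ> comm g E) x + d g * E x)" for g
  proof
    fix x
    have "d (g * E x) = d g * E x + d (E x) * g"
      using Suc(2) unfolding derivation_def by blast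
    then have e: "d (comm g E x) = d (E (x * g)) - (d g * E x + d (E x) * g)"
      using deriv_diff[OF Suc(2)] by (simp add: comm_def)
    have "comm g (d \<circ> E) x = d (E (x * g)) - g * d (E x)" by (simp add: comm_def)
    also have "\<dots> = (d \<circ> comm g E) x + d g * E x" using e by (simp add: algebra_simps)
    finally show "comm g (d \<circ> E) x = (d \<circ> comm g E) x + d g * E x" .
  qed
  have "ordp (Suc k) (comm g (d \<circ> E))" for g
  proof -
    have c: "ordp k (comm g E)" using Suc(3) by simp
    show ?thesis unfolding key
      by (rule ordp_add[OF Suc.IH[OF Suc(2) c] ordp_smult[OF Suc(3)]])
  qed
  then show ?case by (subst ordp.simps(2)) blast
qed

lemma ordp_id: "ordp 0 (id :: 'a::comm_ring_1 \<Rightarrow> 'a)"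
  by (simp add: comm_def algebra_simps)

lemma ordp_foldr: "\<forall>d\<in>set ds. derivation d \<Longrightarrow> ordp (length ds) (foldr (\<circ>) ds (id :: 'a::comm_ring_1 \<Rightarrow> 'a))"
proof (induction ds)
  case Nil then show ?case by (simp add: comm_def)
next
  case (Cons d ds)
  from Cons.prems have hd: "derivation d" and hds: "\<forall>x\<in>set ds. derivation x" by auto
  have "ordp (length ds) (foldr (\<circ>) ds id)" using Cons.IH hds by blast
  then have "ordp (Suc (length ds)) (d \<circ> foldr (\<circ>) ds id)" by (rule ordp_deriv[OF hd])
  moreover have eq: "foldr (\<circ>) (d # ds) id = d \<circ> foldr (\<circ>) ds id" by simp
  ultimately show ?case unfolding eq length_Cons by blast
qed

lemma diff_ops_ordp:
  assumes "D \<in> diff_ops n" shows "ordp n D"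
proof -
  have "\<exists>(m::nat) c ds. (\<forall>i<m. length (ds i) \<le> n \<and> (\<forall>d\<in>set (ds i). derivation d)) \<and>
      D = (\<lambda>x. \<Sum>i<m. c i * foldr (\<circ>) (ds i) id x)"
    using assms unfolding diff_ops_def by simp
  then obtain m :: nat and c ds where h: "\<forall>i<m. length (ds i) \<le> n \<and> (\<forall>d\<in>set (ds i). derivation d)"
    and D: "D = (\<lambda>x. \<Sum>i<m. c i * foldr (\<circ>) (ds i) id x)"
    by (elim exE conjE)
  have "ordp n (\<lambda>x. \<Sum>i<k. c i * foldr (\<circ>) (ds i) id x)" if "k \<le> m" for k
    using that
  proof (induction k)
    case 0 then show ?case using ordp_zero by simp
  next
    case (Suc k)
    have l: "length (ds k) \<le> n" and dd: "\<forall>d\<in>set (ds k). derivation d" using h[rule_format, of k] Suc(2) by auto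
    have "ordp n (foldr (\<circ>) (ds k) id)"
      using ordp_mono_le[OF ordp_foldr[OF dd] l] .
    moreover have "ordp n (\<lambda>x. \<Sum>i<k. c i * foldr (\<circ>) (ds i) id x)" using Suc.IH[OF Suc_leD[OF Suc.prems]] .
    ultimately have "ordp n (\<lambda>x. (\<Sum>i<k. c i * foldr (\<circ>) (ds i) id x) + c k * foldr (\<circ>) (ds k) id x)"
      using ordp_add[OF _ ordp_smult] by blast
    then show ?case by (simp only: sum.lessThan_Suc)
  qed
  then show ?thesis using D by simp
qed

lemma ordp_foldr_comm: "ordp k E \<Longrightarrow> length gs = Suc k \<Longrightarrow> foldr comm gs E x = 0"
proof (induction k arbitrary: E gs)
  case 0
  then obtain g where "gs = [g]" by (cases gs) auto
  then show ?case using 0 by simp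
next
  case (Suc k)
  then obtain gs' g where gs: "gs = gs' @ [g]" by (cases gs rule: rev_cases) auto
  then have "foldr comm gs E x = foldr comm gs' (comm g E) x" by simp
  then show ?case using Suc gs by simp
qed

lemma fract_formula:
  fixes E :: "'a::idom \<Rightarrow> 'a"
  assumes "x \<noteq> 0" "\<forall>g\<in>set gs. g \<noteq> 0"
  shows "foldr mdelta gs (\<lambda>y. Fract (E y) y) x = Fract (foldr comm gs E x) (x * prod_list gs)"
  using assms
proof (induction gs arbitrary: x)
  case Nil then show ?case by simp
next
  case (Cons g gs)
  let ?C = "foldr comm gs E" and ?P = "prod_list gs"
  have P: "?P \<noteq> 0" using Cons(3) by (induction gs) auto
  have g: "g \<noteq> 0" using Cons(3) by simp
  have "foldr mdelta (g # gs) (\<lambda>y. Fract (E y) y) x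
      = foldr mdelta gs (\<lambda>y. Fract (E y) y) (x * g) - foldr mdelta gs (\<lambda>y. Fract (E y) y) x"
    by (simp add: mdelta_def)
  also have "\<dots> = Fract (?C (x * g)) (x * g * ?P) - Fract (?C x) (x * ?P)"
    using Cons.IH[of "x * g"] Cons.IH[of x] Cons(2,3) g by (simp add: mult.assoc)
  also have "\<dots> = Fract (comm g ?C x) (x * prod_list (g # gs))"
    using P g Cons(2) by (simp add: eq_fract comm_def algebra_simps)
  finally show ?case by simp
qed

fun pts :: "'a::times list \<Rightarrow> 'a \<Rightarrow> 'a set" where
  "pts [] x = {x}"
| "pts (g # gs) x = pts gs (x * g) \<union> pts gs x"

lemma finite_pts: "finite (pts gs x)"
  by (induction gs arbitrary: x) auto

lemma mdelta_agree:
  "\<forall>y\<in>pts gs x. f y = f' y \<Longrightarrow> foldr mdelta gs f x = foldr mdelta gs f' x"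
  by (induction gs arbitrary: x) (auto simp: mdelta_def)

theorem lemma2p5:
  fixes D :: "'a::idom \<Rightarrow> 'a" and n :: nat
  assumes "D \<in> RR_top closure_of (O0 n)"
  shows "gen_poly_on (UNIV - {0}) n (\<lambda>x. Fract (D x) x)"
  unfolding gen_poly_on_def
proof (intro allI impI ballI)
  fix gs :: "'a list" and x :: 'a
  assume gs: "length gs = Suc n \<and> set gs \<subseteq> UNIV - {0}" and x: "x \<in> UNIV - {0}"
  define F where "F = pts gs x"
  define U where "U = (\<Pi>\<^sub>E i\<in>UNIV. (if i \<in> F then {D i} else (UNIV::'a set)))"
  have "openin RR_top U"
    unfolding U_def RR_top_def
    by (rule product_topology_basis) (auto simp: F_def finite_pts intro: finite_subset[OF _ finite_pts[of gs x]])
  moreover have "D \<in> U" unfolding U_def by auto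
  ultimately obtain D' where D': "D' \<in> O0 n" "D' \<in> U"
    using assms unfolding in_closure_of by blast
  have agree: "\<forall>y\<in>F. D' y = D y"
  proof
    fix y assume "y \<in> F"
    have "D' y \<in> (if y \<in> F then {D y} else UNIV)"
      using D'(2) unfolding U_def by (rule PiE_mem) simp
    then show "D' y = D y" using \<open>y \<in> F\<close> by simp
  qed
  have "ordp n D'" using D'(1) diff_ops_ordp unfolding O0_def by blast
  then have "foldr comm gs D' x = 0" using ordp_foldr_comm gs by blast
  then have "foldr mdelta gs (\<lambda>y. Fract (D' y) y) x = 0"
  proof -
    have "\<forall>g\<in>set gs. g \<noteq> 0" using gs by auto
    then have "foldr mdelta gs (\<lambda>y. Fract (D' y) y) x = Fract 0 (x * prod_list gs)"
      using fract_formula[of x gs D'] x \<open>foldr comm gs D' x = 0\<close> by simp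
    then show ?thesis by (simp add: eq_fract Zero_fract_def)
  qed
  moreover have "foldr mdelta gs (\<lambda>y. Fract (D' y) y) x = foldr mdelta gs (\<lambda>y. Fract (D y) y) x"
    by (rule mdelta_agree) (use agree F_def in auto)
  ultimately show "foldr mdelta gs (\<lambda>x. Fract (D x) x) x = 0" by simp
qed

end
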